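(* Let $\{c_n\}_{n\ge1}$ be a real sequence, $\{d_{n+1}\}_{n\ge1}$ a positive chain sequence, and let $P_0(x)=1$, $P_1(x)=x-c_1$, $P_{n+1}(x)=(x-c_{n+1})P_n(x)-d_{n+1}(x^2+1)P_{n-1}(x)$ for $n\ge1$. Let $n\ge2$. If \[ c_1>\sqrt{d_2},\quad c_j>\sqrt{d_j}+\sqrt{d_{j+1}}\ (j=2,\dots,n-1),\quad c_n>\sqrt{d_n}, \] then all zeros of $P_n$ are positive. If \[ c_1<-\sqrt{d_2},\quad c_j<-\sqrt{d_j}-\sqrt{d_{j+1}}\ (j=2,\dots,n-1),\quad c_n<-\sqrt{d_n}, \] then all zeros of $P_n$ are negative.
   Context: A sequence $\{d_{n+1}\}_{n\ge1}$ is a positive chain sequence if there is a sequence $\{g_{n+1}\}_{n\ge0}$ with $0\le g_1<1$, $0<g_n<1$ for $n\ge2$, and $d_{n+1}=(1-g_n)g_{n+1}$ for $n\ge1$. *)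

theory Defs
  imports "HOL-Analysis.Analysis" "HOL-Computational_Algebra.Polynomial"
begin

text \<open>Positive chain sequence: d (n+1) for n \<ge> 1, with parameter sequence g indexed from 1
  (g 0 unused).\<close>
definition positive_chain_seq :: "(nat \<Rightarrow> real) \<Rightarrow> bool" where
  "positive_chain_seq d \<longleftrightarrow> (\<exists>g :: nat \<Rightarrow> real.
      0 \<le> g 1 \<and> g 1 < 1 \<and> (\<forall>n\<ge>2. 0 < g n \<and> g n < 1) \<and>
      (\<forall>n\<ge>1. d (n + 1) = (1 - g n) * g (n + 1)))"

fun Pseq :: "(nat \<Rightarrow> real) \<Rightarrow> (nat \<Rightarrow> real) \<Rightarrow> nat \<Rightarrow> real poly" where
  "Pseq c d 0 = 1"
| "Pseq c d (Suc 0) = [:- c 1, 1:]"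
| "Pseq c d (Suc (Suc n)) =
     [:- c (n + 2), 1:] * Pseq c d (Suc n) - smult (d (n + 2)) [:1, 0, 1:] * Pseq c d n"

end

theory Submission
  imports Defs
begin

lemma alg_step:
  fixes p q y t g' c dd :: real
  assumes p: "p > 0" and y: "y \<ge> 0" and t: "t > 0" and g: "g' \<ge> 0"
    and dd: "dd = t * g'" and h: "q - t * y * p > sqrt dd * p"
  shows "(c + y) * q - dd * (1 + y^2) * p \<ge> (c - sqrt dd) * q + (1 - g') * y * q"
proof -
  have dd0: "dd \<ge> 0" using dd t g by (simp add: mult_nonneg_nonneg)
  have s0: "sqrt dd \<ge> 0" using dd0 by simp
  have ss: "sqrt dd * sqrt dd = dd" using dd0 by simp
  have "t * y * p \<ge> 0" using t y p by simp
  hence q1: "q > sqrt dd * p" using h by linarith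
  have a: "dd * p \<le> sqrt dd * q"
  proof -
    have "sqrt dd * (sqrt dd * p) \<le> sqrt dd * q" using q1 s0 by (intro mult_left_mono) auto
    thus ?thesis using ss by (simp add: mult.assoc[symmetric])
  qed
  have "sqrt dd * p \<ge> 0" using s0 p by simp
  hence q2: "q \<ge> t * y * p" using h by linarith
  have b: "t * g' * y^2 * p \<le> g' * y * q"
  proof -
    have "(g' * y) * (t * y * p) \<le> (g' * y) * q" using q2 g y by (intro mult_left_mono) auto
    thus ?thesis by (simp add: power2_eq_square algebra_simps)
  qed
  have "(c + y) * q - dd * (1 + y^2) * p = (c + y) * q - dd * p - t * g' * y^2 * p"
    using dd by (simp add: algebra_simps)
  also have "\<dots> \<ge> (c + y) * q - sqrt dd * q - g' * y * q" using a b by linarith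
  finally show ?thesis by (simp add: algebra_simps)
qed

lemma no_nonpos_root:
  fixes c d g :: "nat \<Rightarrow> real" and y :: real
  assumes g1: "0 \<le> g 1" "g 1 < 1" and gn: "\<forall>k\<ge>2. 0 < g k \<and> g k < 1"
    and dg: "\<forall>k\<ge>1. d (k + 1) = (1 - g k) * g (k + 1)"
    and n2: "n \<ge> 2" and c1: "c 1 > sqrt (d 2)"
    and cj: "\<forall>j\<in>{2..n-1}. c j > sqrt (d j) + sqrt (d (j + 1))"
    and cn: "c n > sqrt (d n)" and y: "y \<ge> 0"
  shows "poly (Pseq c d n) (- y) \<noteq> 0"
proof -
  define \<sigma> where "\<sigma> k = (-1) ^ k * poly (Pseq c d k) (- y)" for k
  have rec: "\<sigma> (Suc (Suc k)) = (c (k + 2) + y) * \<sigma> (Suc k) - d (k + 2) * (1 + y^2) * \<sigma> k" for k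
    by (simp add: \<sigma>_def power2_eq_square algebra_simps)
  have tpos: "0 < 1 - g k" if "k \<ge> 1" for k
    using that g1 gn by (cases "k = 1") auto
  have gnn: "0 \<le> g k" if "k \<ge> 1" for k
  proof (cases "k = 1")
    case False
    hence "k \<ge> 2" using that by simp
    thus ?thesis using gn by (simp add: less_imp_le)
  qed (use g1 in auto)
  have dnn: "0 \<le> d (k + 1)" if "k \<ge> 1" for k
    using dg that tpos[OF that] gnn[of "k+1"] by (simp add: less_imp_le)
  have inv: "k \<ge> 1 \<Longrightarrow> k \<le> n - 1 \<Longrightarrow> \<sigma> (k - 1) > 0 \<and>
      \<sigma> k - (1 - g k) * y * \<sigma> (k - 1) > sqrt (d (k + 1)) * \<sigma> (k - 1)" for k
  proof (induction k)
    case 0 thus ?case by simp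
  next
    case (Suc k)
    show ?case
    proof (cases "k = 0")
      case True
      have "c 1 + y - (1 - g 1) * y > sqrt (d 2)"
      proof -
        have "g 1 * y \<ge> 0" using g1 y by simp
        thus ?thesis using c1 by (simp add: algebra_simps)
      qed
      thus ?thesis using True by (simp add: \<sigma>_def numeral_2_eq_2 algebra_simps)
    next
      case False
      hence k1: "k \<ge> 1" by simp
      from Suc.IH[OF k1] Suc.prems have IH: "\<sigma> (k - 1) > 0"
        "\<sigma> k - (1 - g k) * y * \<sigma> (k - 1) > sqrt (d (k + 1)) * \<sigma> (k - 1)" by auto
      have ks: "k = Suc (k - 1)" using k1 by simp
      have r: "\<sigma> (Suc k) = (c (k + 1) + y) * \<sigma> k - d (k + 1) * (1 + y^2) * \<sigma> (k - 1)"
      proof -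
        obtain m where m: "k = Suc m" using k1 by (cases k) auto
        show ?thesis using rec[of m] unfolding m by simp
      qed
      have A: "(c (k+1) + y) * \<sigma> k - d (k + 1) * (1 + y^2) * \<sigma> (k - 1)
          \<ge> (c (k+1) - sqrt (d (k+1))) * \<sigma> k + (1 - g (k+1)) * y * \<sigma> k"
        by (rule alg_step[OF IH(1) y tpos[OF k1] gnn _ IH(2)]) (use dg k1 in auto)
      have "(1 - g k) * y * \<sigma> (k - 1) \<ge> 0" "sqrt (d (k + 1)) * \<sigma> (k - 1) \<ge> 0"
        using IH(1) tpos[OF k1] y dnn[OF k1] by simp_all
      hence qpos: "\<sigma> k > 0" using IH(2) by linarith
      have cc: "c (k+1) > sqrt (d (k+1)) + sqrt (d (k+1+1))" using cj Suc.prems k1 by auto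
      have "(c (k+1) - sqrt (d (k+1))) * \<sigma> k > sqrt (d (k+1+1)) * \<sigma> k"
        using cc qpos by (intro mult_strict_right_mono) auto
      hence "\<sigma> (Suc k) - (1 - g (Suc k)) * y * \<sigma> k > sqrt (d (Suc k + 1)) * \<sigma> k"
        using A r by simp
      thus ?thesis using qpos by simp
    qed
  qed
  have n1: "n - 1 \<ge> 1" using n2 by simp
  from inv[OF n1] have I: "\<sigma> (n - 1 - 1) > 0"
    "\<sigma> (n - 1) - (1 - g (n - 1)) * y * \<sigma> (n - 1 - 1) > sqrt (d (n - 1 + 1)) * \<sigma> (n - 1 - 1)" by auto
  have ns: "n = Suc (Suc (n - 2))" using n2 by simp
  have r: "\<sigma> n = (c n + y) * \<sigma> (n - 1) - d n * (1 + y^2) * \<sigma> (n - 1 - 1)"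
  proof -
    obtain m where m: "n = Suc (Suc m)" using ns by blast
    show ?thesis using rec[of m] unfolding m by simp
  qed
  have d': "d (n - 1 + 1) = (1 - g (n - 1)) * g n" using dg[rule_format, OF n1] n2 by simp
  have A: "(c n + y) * \<sigma> (n - 1) - d n * (1 + y^2) * \<sigma> (n - 1 - 1)
      \<ge> (c n - sqrt (d n)) * \<sigma> (n - 1) + (1 - g n) * y * \<sigma> (n - 1)"
    using alg_step[OF I(1) y tpos[OF n1] gnn[of n] d' I(2), of "c n"] n2 ns by auto
  have "(1 - g (n - 1)) * y * \<sigma> (n - 1 - 1) \<ge> 0" "sqrt (d (n - 1 + 1)) * \<sigma> (n - 1 - 1) \<ge> 0"
    using I(1) tpos[OF n1] y dnn[OF n1] by simp_all
  hence qpos: "\<sigma> (n - 1) > 0" using I(2) by linarith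
  have "(c n - sqrt (d n)) * \<sigma> (n - 1) > 0" using cn qpos by simp
  moreover have "(1 - g n) * y * \<sigma> (n - 1) \<ge> 0" using tpos[of n] n2 y qpos by simp
  ultimately have "\<sigma> n > 0" using A r by linarith
  thus ?thesis unfolding \<sigma>_def by auto
qed

lemma Pseq_neg:
  "poly (Pseq c d n) x = (-1) ^ n * poly (Pseq (\<lambda>k. - c k) d n) (- x)"
  by (induction c d n rule: Pseq.induct) (simp_all add: algebra_simps)

theorem theorem2p3:
  fixes c d :: "nat \<Rightarrow> real" and n :: nat
  assumes chain: "positive_chain_seq d"
    and n2: "n \<ge> 2"
  shows "((c 1 > sqrt (d 2) \<and> (\<forall>j\<in>{2..n-1}. c j > sqrt (d j) + sqrt (d (j + 1)))
            \<and> c n > sqrt (d n))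
           \<longrightarrow> (\<forall>x::real. poly (Pseq c d n) x = 0 \<longrightarrow> x > 0)) \<and>
         ((c 1 < - sqrt (d 2) \<and> (\<forall>j\<in>{2..n-1}. c j < - sqrt (d j) - sqrt (d (j + 1)))
            \<and> c n < - sqrt (d n))
           \<longrightarrow> (\<forall>x::real. poly (Pseq c d n) x = 0 \<longrightarrow> x < 0))"
proof -
  obtain g where g1: "0 \<le> g 1" "g 1 < 1" and gn: "\<forall>k\<ge>2. 0 < g k \<and> g k < 1"
    and dg: "\<forall>k\<ge>1. d (k + 1) = (1 - g k) * g (k + 1)"
    using chain unfolding positive_chain_seq_def by blast
  show ?thesis
  proof (intro conjI impI allI)
    fix x assume h: "c 1 > sqrt (d 2) \<and> (\<forall>j\<in>{2..n-1}. c j > sqrt (d j) + sqrt (d (j + 1)))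
            \<and> c n > sqrt (d n)" and z: "poly (Pseq c d n) x = 0"
    show "x > 0"
    proof (rule ccontr)
      assume "\<not> x > 0"
      hence "- x \<ge> 0" by simp
      from no_nonpos_root[OF g1 gn dg n2 _ _ _ this] h z show False by auto
    qed
  next
    fix x assume h: "c 1 < - sqrt (d 2) \<and> (\<forall>j\<in>{2..n-1}. c j < - sqrt (d j) - sqrt (d (j + 1)))
            \<and> c n < - sqrt (d n)" and z: "poly (Pseq c d n) x = 0"
    show "x < 0"
    proof (rule ccontr)
      assume "\<not> x < 0"
      hence x0: "x \<ge> 0" by simp
      have h': "(\<lambda>k. - c k) 1 > sqrt (d 2)" "\<forall>j\<in>{2..n-1}. (\<lambda>k. - c k) j > sqrt (d j) + sqrt (d (j + 1))"
        "(\<lambda>k. - c k) n > sqrt (d n)" using h by auto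
      from no_nonpos_root[OF g1 gn dg n2 h' x0] have "poly (Pseq (\<lambda>k. - c k) d n) (- x) \<noteq> 0" .
      with z Pseq_neg[of c d n x] show False by simp
    qed
  qed
qed

end
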